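(* Let $A$ be a system with state space $\Omega_A$ that supports uniform universal steering, with steering partner system $B$ (state space $\Omega_B$) and composite state space $\Omega_A\otimes\Omega_B$ as in the context. Let $$\lambda_{\rm opt}=\inf_{e,f\in\mathscr{E}(\Omega_A)}\lambda_{e,f}.$$ Then the (generalised) Tsirelson bound, i.e. the supremum of the Bell functional $$\mathbb{B}=\omega\big(A_1\otimes B_1+A_1\otimes B_2+A_2\otimes B_1-A_2\otimes B_2\big)$$ over all states $\omega\in\Omega_A\otimes\Omega_B$ and all dichotomic ($\pm1$-valued) observables $\mathsf{A}_1,\mathsf{A}_2$ on $\Omega_A$ and $\mathsf{B}_1,\mathsf{B}_2$ on $\Omega_B$, is given by the tight inequality $$\mathbb{B}\le\frac{2}{\lambda_{\rm opt}},$$ which can be saturated.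
   Context: General probabilistic models: a state space $\Omega$ is a compact convex subset of a finite-dimensional real vector space $V$. $A(\Omega)$ denotes the ordered linear space of affine functionals on $\Omega$ with the pointwise order ($f\ge 0$ iff $f(\omega)\ge0$ for all $\omega\in\Omega$) and order unit $u$ ($u(\omega)=1$ for all $\omega$). The effects are $\mathscr{E}(\Omega)=\{e\in A(\Omega): 0\le e(\omega)\le 1\ \forall\omega\in\Omega\}$. A discrete observable is a map $\mathsf{O}$ from a finite outcome set into $\mathscr{E}(\Omega)$ with $\sum_x\mathsf{O}[x]=u$. A dichotomic observable $\mathsf{O}$ with outcomes $\pm1$ is determined by the effect $e=\mathsf{O}[+1]$, with $\mathsf{O}[-1]=e'=u-e$; its associated functional is $O=\mathsf{O}[+1]-\mathsf{O}[-1]$. The cone $V_+$ is generated by $\Omega$ and $V^*$, $V^*_+$ denote the dual space and dual cone. Joint measurability: effects $e,f$ are jointly measurable if there exists $g\in A(\Omega)$ with $0\le g$, $g\le e$, $g\le f$, $e+f\le g+u$. Smearing: for $\lambda\in[0,1]$, $e^{(\lambda)}=\lambda e+\frac{1-\lambda}{2}u$. For effects $e,f$, $\lambda_{e,f}$ is the maximum of $\lambda\in[0,1]$ such that $e^{(\lambda)}$ and $f^{(\lambda)}$ are jointly measurable (i.e. there is $g\in A(\Omega)$ with $g\le e^{(\lambda)}$, $g\le f^{(\lambda)}$, $0\le g$, $e^{(\lambda)}+f^{(\lambda)}-u\le g$). Composite systems: the state space of a composite of systems with state spaces $\Omega_1\subset V_1$, $\Omega_2\subset V_2$ is $\Omega_1\otimes\Omega_2=\{\omega\in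 (V_1\otimes V_2)_+ : (u_1\otimes u_2)(\omega)=1\}$, where the cone $(V_1\otimes V_2)_+$ is any cone lying between the minimal cone $\{\sum_{i,j}\lambda_{ij}v_1^{(i)}\otimes v_2^{(j)}:\lambda_{ij}\ge0,\ v_k^{(i)}\in(V_k)_+\}$ and the maximal cone $(V_1^*\otimes_{min}V_2^* )_+^*$. For $a\in V_1^*$, $b\in V_2^*$ write $\omega(a,b)=(a\otimes b)(\omega)$, extended bilinearly. Each bipartite state $\omega$ defines the linear map $\hat\omega:V_2^*\to V_1$ by $a(\hat\omega(b))=\omega(a,b)$. The $A$-marginal of $\omega\in\Omega_A\otimes\Omega_B$ is $\omega^A=\hat\omega(u_B)\in\Omega_A$. Steering: a state $\omega\in\Omega_A\otimes\Omega_B$ is steering for its $A$-marginal if for every finite collection $\alpha_1,\dots,\alpha_n\in(V_A)_+$ with $0\le u_A(\alpha_i)\le1$ and $\sum_i\alpha_i=\omega^A$, there exists an observable $\{e_1,\dots,e_n\}\subset\mathscr{E}(\Omega_B)$ (with $\sum_i e_i=u_B$) such that $\alpha_i=\hat\omega(e_i)$ for all $i$. A system $A$ supports uniform universal steering if there exist a system $B$ with state space $\Omega_B$ and a composite state space $\Omega_A\otimes\Omega_B$ such that for every $\alpha\in\Omega_A$ there is a state $\omega_\alpha\in\Omega_A\otimes\Omega_B$ with $\omega_\alpha^A=\alpha$ that is steering for its $A$-marginal. *)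

theory Defs
  imports "HOL-Analysis.Analysis"
begin

text \<open>Linear functionals on V (elements of V^*) are represented by vectors via the inner
product: the functional a acts as x \<mapsto> a \<bullet> x. A state space is a compact convex
nonempty set spanning V and lying in the affine hyperplane u = 1, where u is the order
unit; then affine functionals on \<Omega> are exactly the restrictions of linear functionals.\<close>

definition gpt_state_space :: "'a::euclidean_space set \<Rightarrow> 'a \<Rightarrow> bool" where
  "gpt_state_space \<Omega> u \<longleftrightarrow> compact \<Omega> \<and> convex \<Omega> \<and> \<Omega> \<noteq> {} \<and> span \<Omega> = UNIV
     \<and> (\<forall>x\<in>\<Omega>. u \<bullet> x = 1)"

definition pos_cone :: "'a::euclidean_space set \<Rightarrow> 'a set" where
  "pos_cone \<Omega> = {t *\<^sub>R x | t x. t \<ge> 0 \<and> x \<in> \<Omega>}"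

definition dual_cone :: "'a::euclidean_space set \<Rightarrow> 'a set" where
  "dual_cone \<Omega> = {a. \<forall>x\<in>pos_cone \<Omega>. 0 \<le> a \<bullet> x}"

definition gpt_effect :: "'a::euclidean_space set \<Rightarrow> 'a \<Rightarrow> bool" where
  "gpt_effect \<Omega> e \<longleftrightarrow> (\<forall>x\<in>\<Omega>. 0 \<le> e \<bullet> x \<and> e \<bullet> x \<le> 1)"

definition jointly_measurable :: "'a::euclidean_space set \<Rightarrow> 'a \<Rightarrow> 'a \<Rightarrow> 'a \<Rightarrow> bool" where
  "jointly_measurable \<Omega> u e f \<longleftrightarrow> (\<exists>g. \<forall>x\<in>\<Omega>.
      0 \<le> g \<bullet> x \<and> g \<bullet> x \<le> e \<bullet> x \<and> g \<bullet> x \<le> f \<bullet> x \<and> e \<bullet> x + f \<bullet> x \<le> g \<bullet> x + u \<bullet> x)"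

definition smear :: "'a::euclidean_space \<Rightarrow> real \<Rightarrow> 'a \<Rightarrow> 'a" where
  "smear u l e = l *\<^sub>R e + ((1 - l) / 2) *\<^sub>R u"

definition lambda_ef :: "'a::euclidean_space set \<Rightarrow> 'a \<Rightarrow> 'a \<Rightarrow> 'a \<Rightarrow> real" where
  "lambda_ef \<Omega> u e f = Sup {l \<in> {0..1}. jointly_measurable \<Omega> u (smear u l e) (smear u l f)}"

definition lambda_opt :: "'a::euclidean_space set \<Rightarrow> 'a \<Rightarrow> real" where
  "lambda_opt \<Omega> u = Inf {lambda_ef \<Omega> u e f | e f. gpt_effect \<Omega> e \<and> gpt_effect \<Omega> f}"

text \<open>Elements of V_A \<otimes> V_B are represented as bilinear forms on V_A^* \<times> V_B^*,
  so that \<omega>(a,b) = w a b.\<close>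
definition min_tensor_cone :: "'a::euclidean_space set \<Rightarrow> 'b::euclidean_space set \<Rightarrow> ('a \<Rightarrow> 'b \<Rightarrow> real) set" where
  "min_tensor_cone \<Omega>A \<Omega>B = {w. \<exists>(n::nat) x y. (\<forall>i<n. x i \<in> pos_cone \<Omega>A \<and> y i \<in> pos_cone \<Omega>B)
      \<and> w = (\<lambda>a b. \<Sum>i<n. (a \<bullet> x i) * (b \<bullet> y i))}"

definition max_tensor_cone :: "'a::euclidean_space set \<Rightarrow> 'b::euclidean_space set \<Rightarrow> ('a \<Rightarrow> 'b \<Rightarrow> real) set" where
  "max_tensor_cone \<Omega>A \<Omega>B = {w. bilinear w \<and>
      (\<forall>a\<in>dual_cone \<Omega>A. \<forall>b\<in>dual_cone \<Omega>B. 0 \<le> w a b)}"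

definition composite_cone :: "'a::euclidean_space set \<Rightarrow> 'b::euclidean_space set \<Rightarrow> ('a \<Rightarrow> 'b \<Rightarrow> real) set \<Rightarrow> bool" where
  "composite_cone \<Omega>A \<Omega>B C \<longleftrightarrow>
     min_tensor_cone \<Omega>A \<Omega>B \<subseteq> C \<and> C \<subseteq> max_tensor_cone \<Omega>A \<Omega>B \<and>
     (\<forall>w\<in>C. \<forall>v\<in>C. (\<lambda>a b. w a b + v a b) \<in> C) \<and>
     (\<forall>w\<in>C. \<forall>t::real. 0 \<le> t \<longrightarrow> (\<lambda>a b. t * w a b) \<in> C)"

definition composite_states :: "'a::euclidean_space \<Rightarrow> 'b::euclidean_space \<Rightarrow> ('a \<Rightarrow> 'b \<Rightarrow> real) set \<Rightarrow> ('a \<Rightarrow> 'b \<Rightarrow> real) set" where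
  "composite_states uA uB C = {w \<in> C. w uA uB = 1}"

text \<open>The map \<omega>-hat : V_B^* \<rightarrow> V_A with a(\<omega>-hat(b)) = \<omega>(a,b).\<close>
definition hat :: "('a::euclidean_space \<Rightarrow> 'b \<Rightarrow> real) \<Rightarrow> 'b \<Rightarrow> 'a" where
  "hat w b = (\<Sum>i\<in>Basis. w i b *\<^sub>R i)"

definition steering :: "'a::euclidean_space set \<Rightarrow> 'a \<Rightarrow> 'b::euclidean_space set \<Rightarrow> 'b \<Rightarrow> ('a \<Rightarrow> 'b \<Rightarrow> real) \<Rightarrow> bool" where
  "steering \<Omega>A uA \<Omega>B uB w \<longleftrightarrow>
     (\<forall>(n::nat) (\<alpha>::nat \<Rightarrow> 'a).
        (\<forall>i<n. \<alpha> i \<in> pos_cone \<Omega>A \<and> 0 \<le> uA \<bullet> \<alpha> i \<and> uA \<bullet> \<alpha> i \<le> 1) \<and>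
        (\<Sum>i<n. \<alpha> i) = hat w uB \<longrightarrow>
        (\<exists>e::nat \<Rightarrow> 'b. (\<forall>i<n. gpt_effect \<Omega>B (e i)) \<and> (\<Sum>i<n. e i) = uB \<and>
             (\<forall>i<n. \<alpha> i = hat w (e i))))"

text \<open>Bell functional for dichotomic observables given by effects a1,a2 (on A), b1,b2 (on B),
  with associated functionals A_i = 2 a_i - u_A, B_j = 2 b_j - u_B.\<close>
definition bell :: "'a::euclidean_space \<Rightarrow> 'b::euclidean_space \<Rightarrow> ('a \<Rightarrow> 'b \<Rightarrow> real) \<Rightarrow> 'a \<Rightarrow> 'a \<Rightarrow> 'b \<Rightarrow> 'b \<Rightarrow> real" where
  "bell uA uB w a1 a2 b1 b2 =
     (let A1 = 2 *\<^sub>R a1 - uA; A2 = 2 *\<^sub>R a2 - uA; B1 = 2 *\<^sub>R b1 - uB; B2 = 2 *\<^sub>R b2 - uB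
      in w A1 B1 + w A1 B2 + w A2 B1 - w A2 B2)"

end

theory Submission
  imports Defs
begin


lemma ss_u: "gpt_state_space \<Omega> u \<Longrightarrow> x \<in> \<Omega> \<Longrightarrow> u \<bullet> x = 1"
  by (simp add: gpt_state_space_def)

lemma pos_cone_hull: "pos_cone \<Omega> = conic hull \<Omega>"
  by (simp add: pos_cone_def conic_hull_explicit)

lemma cone_closed: assumes "gpt_state_space \<Omega> u" shows "closed (pos_cone \<Omega>)"
proof -
  have "0 \<notin> \<Omega>" using assms by (auto simp: gpt_state_space_def)
  then show ?thesis unfolding pos_cone_hull
    by (intro closed_conic_hull) (use assms in \<open>auto simp: gpt_state_space_def\<close>)
qed

lemma cone_convex: assumes "gpt_state_space \<Omega> u" shows "convex (pos_cone \<Omega>)"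
  unfolding pos_cone_hull using assms by (intro convex_conic_hull) (auto simp: gpt_state_space_def)

lemma cone_elim: assumes "gpt_state_space \<Omega> u" "y \<in> pos_cone \<Omega>"
  shows "\<exists>x\<in>\<Omega>. y = (u \<bullet> y) *\<^sub>R x \<and> u \<bullet> y \<ge> 0"
  using assms unfolding pos_cone_def gpt_state_space_def by auto

lemma cone_intro: "x \<in> \<Omega> \<Longrightarrow> t \<ge> 0 \<Longrightarrow> t *\<^sub>R x \<in> pos_cone \<Omega>"
  unfolding pos_cone_def by auto

lemma cone_self: "x \<in> \<Omega> \<Longrightarrow> x \<in> pos_cone \<Omega>"
  using cone_intro[of x \<Omega> 1] by simp

lemma cone_zero: assumes "\<Omega> \<noteq> {}" shows "0 \<in> pos_cone \<Omega>"
  using assms cone_intro[of _ \<Omega> 0] by auto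

lemma cone_u: assumes "gpt_state_space \<Omega> u" "y \<in> pos_cone \<Omega>" shows "u \<bullet> y \<ge> 0"
  using cone_elim[OF assms] by auto

lemma cone_func: assumes "\<forall>x\<in>\<Omega>. 0 \<le> d \<bullet> x" "y \<in> pos_cone \<Omega>" shows "0 \<le> d \<bullet> y"
  using assms unfolding pos_cone_def by auto

lemma dual_cone_iff: "d \<in> dual_cone \<Omega> \<longleftrightarrow> (\<forall>x\<in>\<Omega>. 0 \<le> d \<bullet> x)"
  unfolding dual_cone_def using cone_func cone_self by blast

lemma effect_cone: assumes "gpt_state_space \<Omega> u" "gpt_effect \<Omega> e" "y \<in> pos_cone \<Omega>"
  shows "0 \<le> e \<bullet> y \<and> e \<bullet> y \<le> u \<bullet> y"
proof -
  obtain x where x: "x \<in> \<Omega>" "y = (u \<bullet> y) *\<^sub>R x" "u \<bullet> y \<ge> 0" using cone_elim[OF assms(1,3)] by auto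
  have "e \<bullet> y = (u \<bullet> y) * (e \<bullet> x)" by (subst x(2)) simp
  moreover have "0 \<le> e \<bullet> x" "e \<bullet> x \<le> 1" using assms(2) x(1) by (auto simp: gpt_effect_def)
  ultimately show ?thesis using x(3) by (simp add: mult_left_le)
qed

lemma cone_bounded: assumes "gpt_state_space \<Omega> u"
  shows "bounded {y \<in> pos_cone \<Omega>. u \<bullet> y \<le> 1}"
proof -
  have "bounded \<Omega>" using assms by (auto simp: gpt_state_space_def compact_imp_bounded)
  then obtain R where R: "\<forall>x\<in>\<Omega>. norm x \<le> R" by (auto simp: bounded_iff)
  have "norm y \<le> max R 0" if yc: "y \<in> pos_cone \<Omega>" "u \<bullet> y \<le> 1" for y
  proof -
    obtain x where x: "x \<in> \<Omega>" "y = (u \<bullet> y) *\<^sub>R x" "u \<bullet> y \<ge> 0" using cone_elim[OF assms yc(1)] by blast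
    have "norm y = (u \<bullet> y) * norm x" by (subst x(2)) (simp add: x(3))
    also have "\<dots> \<le> 1 * max R 0" using x R yc(2) by (intro mult_mono) auto
    finally show ?thesis by simp
  qed
  then show ?thesis by (auto simp: bounded_iff)
qed

lemma effects_compact: assumes "gpt_state_space \<Omega> u"
  shows "compact {e. gpt_effect \<Omega> e}"
proof -
  have cl: "closed {e. gpt_effect \<Omega> e}"
  proof -
    have "{e. gpt_effect \<Omega> e} = (\<Inter>x\<in>\<Omega>. {e. x \<bullet> e \<le> 1} \<inter> {e. x \<bullet> e \<ge> 0})"
      by (auto simp: gpt_effect_def inner_commute)
    then show ?thesis by (auto intro!: closed_INT closed_Int closed_halfspace_le closed_halfspace_ge)
  qed
  have "\<forall>i\<in>Basis. \<exists>R. \<forall>e. gpt_effect \<Omega> e \<longrightarrow> \<bar>e \<bullet> i\<bar> \<le> R"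
  proof
    fix i :: 'a assume "i \<in> Basis"
    have "i \<in> span \<Omega>" using assms by (auto simp: gpt_state_space_def)
    then obtain T r where T: "finite T" "T \<subseteq> \<Omega>" "i = (\<Sum>v\<in>T. r v *\<^sub>R v)"
      unfolding span_explicit by auto
    have "\<bar>e \<bullet> i\<bar> \<le> (\<Sum>v\<in>T. \<bar>r v\<bar>)" if "gpt_effect \<Omega> e" for e
    proof -
      have "e \<bullet> i = (\<Sum>v\<in>T. r v * (e \<bullet> v))" by (simp add: T(3) inner_sum_right)
      then have "\<bar>e \<bullet> i\<bar> \<le> (\<Sum>v\<in>T. \<bar>r v * (e \<bullet> v)\<bar>)" by (simp add: sum_abs)
      also have "\<dots> \<le> (\<Sum>v\<in>T. \<bar>r v\<bar>)"
      proof (rule sum_mono)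
        fix v assume "v \<in> T"
        then have "0 \<le> e \<bullet> v" "e \<bullet> v \<le> 1" using that T(2) by (auto simp: gpt_effect_def)
        then show "\<bar>r v * (e \<bullet> v)\<bar> \<le> \<bar>r v\<bar>" by (simp add: abs_mult mult_left_le)
      qed
      finally show ?thesis .
    qed
    then show "\<exists>R. \<forall>e. gpt_effect \<Omega> e \<longrightarrow> \<bar>e \<bullet> i\<bar> \<le> R" by blast
  qed
  then obtain R where R: "\<forall>i\<in>Basis. \<forall>e. gpt_effect \<Omega> e \<longrightarrow> \<bar>e \<bullet> i\<bar> \<le> R i" by metis
  have "norm e \<le> (\<Sum>i\<in>Basis. R i)" if "gpt_effect \<Omega> e" for e
  proof -
    have "norm e \<le> (\<Sum>i\<in>Basis. \<bar>e \<bullet> i\<bar>)" by (rule norm_le_l1)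
    also have "\<dots> \<le> (\<Sum>i\<in>Basis. R i)" using R that by (intro sum_mono) auto
    finally show ?thesis .
  qed
  then have "bounded {e. gpt_effect \<Omega> e}" by (auto simp: bounded_iff)
  with cl show ?thesis by (simp add: compact_eq_bounded_closed)
qed

lemma hat_inner: assumes "bilinear w" shows "a \<bullet> hat w b = w a b"
proof -
  have lin: "linear (\<lambda>x. w x b)" using assms by (simp add: bilinear_def)
  have "a \<bullet> hat w b = (\<Sum>i\<in>Basis. (a \<bullet> i) * w i b)"
    by (simp add: hat_def inner_sum_right mult.commute)
  also have "\<dots> = w (\<Sum>i\<in>Basis. (a \<bullet> i) *\<^sub>R i) b"
    by (simp add: linear_sum[OF lin] linear_scale[OF lin])
  also have "\<dots> = w a b" by (simp add: euclidean_representation)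
  finally show ?thesis .
qed



lemma jm_bell:
  fixes e f g :: "'a::euclidean_space" and uB b1 b2 :: "'b::euclidean_space"
  assumes wC: "w \<in> max_tensor_cone \<Omega>A \<Omega>B" and wn: "w uA uB = 1"
    and b1: "gpt_effect \<Omega>B b1" and b2: "gpt_effect \<Omega>B b2"
    and ssB: "gpt_state_space \<Omega>B uB"
    and g: "\<forall>x\<in>\<Omega>A. 0 \<le> g \<bullet> x \<and> g \<bullet> x \<le> e \<bullet> x \<and> g \<bullet> x \<le> f \<bullet> x \<and> e \<bullet> x + f \<bullet> x \<le> g \<bullet> x + uA \<bullet> x"
  shows "bell uA uB w e f b1 b2 \<le> 2"
proof -
  have bil: "bilinear w" and pos: "\<And>a b. a \<in> dual_cone \<Omega>A \<Longrightarrow> b \<in> dual_cone \<Omega>B \<Longrightarrow> 0 \<le> w a b"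
    using wC by (auto simp: max_tensor_cone_def)
  have G1: "g \<in> dual_cone \<Omega>A" and G2: "e - g \<in> dual_cone \<Omega>A" and G3: "f - g \<in> dual_cone \<Omega>A"
    and G4: "uA - e - f + g \<in> dual_cone \<Omega>A"
    using g by (auto simp: dual_cone_iff inner_diff_left inner_add_left)
  have uBx: "\<forall>x\<in>\<Omega>B. uB \<bullet> x = 1" using ssB by (auto simp: gpt_state_space_def)
  have H1: "b1 \<in> dual_cone \<Omega>B" and H2: "uB - b1 \<in> dual_cone \<Omega>B"
    and H3: "b2 \<in> dual_cone \<Omega>B" and H4: "uB - b2 \<in> dual_cone \<Omega>B"
    using b1 b2 uBx by (auto simp: dual_cone_iff gpt_effect_def inner_diff_left)
  note ex = bilinear_ladd[OF bil] bilinear_lsub[OF bil] bilinear_radd[OF bil] bilinear_rsub[OF bil]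
    bilinear_lmul[OF bil] bilinear_rmul[OF bil]
  have P: "0 \<le> w G H" if "G \<in> {g, e - g, f - g, uA - e - f + g}" "H \<in> {b1, uB - b1, b2, uB - b2}" for G H
    using that G1 G2 G3 G4 H1 H2 H3 H4 pos by auto
  have "0 \<le> w g b1" "0 \<le> w (e - g) b1" "0 \<le> w (f - g) b1" "0 \<le> w (uA - e - f + g) b1"
    "0 \<le> w g (uB - b1)" "0 \<le> w (e - g) (uB - b1)" "0 \<le> w (f - g) (uB - b1)" "0 \<le> w (uA - e - f + g) (uB - b1)"
    "0 \<le> w g b2" "0 \<le> w (e - g) b2" "0 \<le> w (f - g) b2" "0 \<le> w (uA - e - f + g) b2"
    "0 \<le> w g (uB - b2)" "0 \<le> w (e - g) (uB - b2)" "0 \<le> w (f - g) (uB - b2)" "0 \<le> w (uA - e - f + g) (uB - b2)"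
    by (auto intro!: P)
  then show ?thesis using wn unfolding bell_def Let_def by (simp add: ex)
qed

lemma smear_bell:
  assumes bil: "bilinear w"
  shows "bell uA uB w (smear uA l a1) (smear uA l a2) b1 b2 = l * bell uA uB w a1 a2 b1 b2"
proof -
  have s: "2 *\<^sub>R smear uA l a - uA = l *\<^sub>R (2 *\<^sub>R a - uA)" for a
  proof -
    have "2 *\<^sub>R smear uA l a = (2*l) *\<^sub>R a + (1 - l) *\<^sub>R uA" by (simp add: smear_def scaleR_add_right)
    then show ?thesis by (simp add: algebra_simps)
  qed
  show ?thesis unfolding bell_def Let_def s bilinear_lmul[OF bil] by (simp add: algebra_simps)
qed



lemma cone_scale: "y \<in> pos_cone \<Omega> \<Longrightarrow> 0 \<le> t \<Longrightarrow> t *\<^sub>R y \<in> pos_cone \<Omega>"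
  unfolding pos_cone_hull by (rule conicD[OF conic_conic_hull])

lemma cone_add: assumes ss: "gpt_state_space \<Omega> u" and "y1 \<in> pos_cone \<Omega>" "y2 \<in> pos_cone \<Omega>"
  shows "y1 + y2 \<in> pos_cone \<Omega>"
proof -
  have "(1/2) *\<^sub>R y1 + (1/2) *\<^sub>R y2 \<in> pos_cone \<Omega>"
    using cone_convex[OF ss] assms(2,3) by (intro convexD) auto
  from cone_scale[OF this, of 2] show ?thesis by (simp add: scaleR_add_right)
qed

lemma cone_state: assumes ss: "gpt_state_space \<Omega> u" and "y \<in> pos_cone \<Omega>" "u \<bullet> y = 1"
  shows "y \<in> \<Omega>"
  using cone_elim[OF ss assms(2)] assms(3) by auto

lemma core:
  fixes e f u :: "'a::euclidean_space"
  assumes ss: "gpt_state_space \<Omega> u" and dpos: "\<delta> > 0"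
    and H: "\<And>\<alpha>0 \<beta>1 \<beta>2. \<alpha>0 \<in> \<Omega> \<Longrightarrow> \<beta>1 \<in> pos_cone \<Omega> \<Longrightarrow> \<beta>2 \<in> pos_cone \<Omega> \<Longrightarrow>
        \<alpha>0 - \<beta>1 \<in> pos_cone \<Omega> \<Longrightarrow> \<alpha>0 - \<beta>2 \<in> pos_cone \<Omega> \<Longrightarrow>
        (2 *\<^sub>R e - u) \<bullet> (\<beta>1 + \<beta>2 - \<alpha>0) + (2 *\<^sub>R f - u) \<bullet> (\<beta>1 - \<beta>2) \<le> 1 - \<delta>"
  shows "jointly_measurable \<Omega> u e f"
proof -
  define c where "c = e + f - u"
  define Cn where "Cn = pos_cone \<Omega>"
  define T :: "'a \<times> 'a \<times> 'a \<times> 'a \<Rightarrow> 'a \<times> real" where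
    "T z = (fst z + fst (snd z) - fst (snd (snd z)) - snd (snd (snd z)),
            c \<bullet> fst (snd z) - e \<bullet> fst (snd (snd z)) - f \<bullet> snd (snd (snd z)))" for z
  define P where "P = (Cn \<times> Cn \<times> Cn \<times> Cn) \<inter> {z. (u, u, u, u) \<bullet> z = 1}"
  define K where "K = T ` P"
  define L :: "('a \<times> real) set" where "L = {0} \<times> {-\<delta>/8..}"
  have memP: "(a1, a2, a3, a4) \<in> P \<longleftrightarrow> a1 \<in> Cn \<and> a2 \<in> Cn \<and> a3 \<in> Cn \<and> a4 \<in> Cn \<and>
      u \<bullet> a1 + u \<bullet> a2 + u \<bullet> a3 + u \<bullet> a4 = 1" for a1 a2 a3 a4
    by (simp add: P_def add.assoc)
  have linT: "linear T"
    by (rule linearI) (auto simp: T_def inner_add_right inner_scaleR_right algebra_simps)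
  have Cnconv: "convex Cn" and Cncl: "closed Cn" using cone_convex[OF ss] cone_closed[OF ss] by (auto simp: Cn_def)
  have convP: "convex P" unfolding P_def
    by (intro convex_Int convex_Times Cnconv convex_hyperplane)
  have clP: "closed P" unfolding P_def
    by (intro closed_Int closed_Times Cncl closed_hyperplane)
  define Bc where "Bc = {y \<in> pos_cone \<Omega>. u \<bullet> y \<le> 1}"
  have "P \<subseteq> Bc \<times> Bc \<times> Bc \<times> Bc"
  proof
    fix z assume zP: "z \<in> P"
    obtain a1 a2 a3 a4 where z: "z = (a1, a2, a3, a4)" by (cases z) auto
    from zP have m: "a1 \<in> Cn" "a2 \<in> Cn" "a3 \<in> Cn" "a4 \<in> Cn" "u \<bullet> a1 + u \<bullet> a2 + u \<bullet> a3 + u \<bullet> a4 = 1"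
      using memP z by blast+
    have "u \<bullet> a1 \<ge> 0" "u \<bullet> a2 \<ge> 0" "u \<bullet> a3 \<ge> 0" "u \<bullet> a4 \<ge> 0"
      using m cone_u[OF ss] by (auto simp: Cn_def)
    then show "z \<in> Bc \<times> Bc \<times> Bc \<times> Bc" using m by (auto simp: Bc_def Cn_def z)
  qed
  moreover have "bounded Bc" using cone_bounded[OF ss] by (simp add: Bc_def)
  ultimately have bP: "bounded P"
    by (metis bounded_subset bounded_Times)
  have cK: "compact K" unfolding K_def using clP bP linT
    by (intro compact_continuous_image linear_continuous_on)
       (auto simp: compact_eq_bounded_closed linear_conv_bounded_linear)
  have cvK: "convex K" unfolding K_def using convex_linear_image[OF linT convP] .
  obtain x0 where x0: "x0 \<in> \<Omega>" using ss by (auto simp: gpt_state_space_def)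
  have uOm: "\<And>x. x \<in> \<Omega> \<Longrightarrow> u \<bullet> x = 1" using ss by (simp add: ss_u)
  have Cnx: "x \<in> Cn" if "x \<in> \<Omega>" for x using cone_self that by (auto simp: Cn_def)
  have Cn0: "0 \<in> Cn" using cone_zero x0 by (auto simp: Cn_def)
  have "(x0, 0, 0, 0) \<in> P" using memP[of x0 0 0 0] x0 Cnx Cn0 uOm by simp
  then have Kne: "K \<noteq> {}" unfolding K_def by blast
  have cvL: "convex L" unfolding L_def by (intro convex_Times) auto
  have clL: "closed L" unfolding L_def by (intro closed_Times) auto
  have disj: "K \<inter> L = {}"
  proof (rule ccontr)
    assume "K \<inter> L \<noteq> {}"
    then obtain a1 a2 a3 a4 where inP: "(a1, a2, a3, a4) \<in> P" and inL: "T (a1, a2, a3, a4) \<in> L"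
      unfolding K_def by auto
    then have m: "a1 \<in> Cn" "a2 \<in> Cn" "a3 \<in> Cn" "a4 \<in> Cn" "u \<bullet> a1 + u \<bullet> a2 + u \<bullet> a3 + u \<bullet> a4 = 1"
      using memP by blast+
    from inL have bal: "a1 + a2 - a3 - a4 = 0" and tt: "c \<bullet> a2 - e \<bullet> a3 - f \<bullet> a4 \<ge> -\<delta>/8"
      by (auto simp: L_def T_def)
    have bal2: "a1 + a2 = a3 + a4" using bal by (simp add: algebra_simps)
    define \<gamma> where "\<gamma> = a3 + a4"
    have "u \<bullet> (a1 + a2) = u \<bullet> (a3 + a4)" using bal2 by simp
    then have ug: "u \<bullet> a3 + u \<bullet> a4 = 1/2" using m(5) by (simp add: inner_add_right)
    have a0C: "2 *\<^sub>R \<gamma> \<in> pos_cone \<Omega>" unfolding \<gamma>_def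
      using cone_scale[OF cone_add[OF ss, of a3 a4]] m by (auto simp: Cn_def)
    have a0: "2 *\<^sub>R \<gamma> \<in> \<Omega>"
      by (rule cone_state[OF ss a0C]) (simp add: \<gamma>_def inner_add_right ug)
    have b1: "2 *\<^sub>R a2 \<in> pos_cone \<Omega>" "2 *\<^sub>R a4 \<in> pos_cone \<Omega>"
      using m cone_scale[of _ \<Omega> 2] by (auto simp: Cn_def)
    have d1: "2 *\<^sub>R \<gamma> - 2 *\<^sub>R a2 = 2 *\<^sub>R a1" using bal2 unfolding \<gamma>_def
      by (metis add_diff_cancel_right' scaleR_right_diff_distrib)
    have d2: "2 *\<^sub>R \<gamma> - 2 *\<^sub>R a4 = 2 *\<^sub>R a3" unfolding \<gamma>_def by (simp add: scaleR_add_right)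
    have c1: "2 *\<^sub>R \<gamma> - 2 *\<^sub>R a2 \<in> pos_cone \<Omega>" "2 *\<^sub>R \<gamma> - 2 *\<^sub>R a4 \<in> pos_cone \<Omega>"
      unfolding d1 d2 using m cone_scale[of _ \<Omega> 2] by (auto simp: Cn_def)
    note Hx = H[OF a0 b1 c1]
    have "(2 *\<^sub>R e - u) \<bullet> (2 *\<^sub>R a2 + 2 *\<^sub>R a4 - 2 *\<^sub>R \<gamma>) + (2 *\<^sub>R f - u) \<bullet> (2 *\<^sub>R a2 - 2 *\<^sub>R a4)
        = 4 * (c \<bullet> a2 - e \<bullet> a3 - f \<bullet> a4) + 2 * (u \<bullet> a3 + u \<bullet> a4)"
      unfolding \<gamma>_def c_def by (simp add: inner_simps algebra_simps)
    with Hx ug tt dpos show False by simp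
  qed
  obtain a b where sepK: "\<forall>z\<in>K. a \<bullet> z < b" and sepL: "\<forall>z\<in>L. b < a \<bullet> z"
    using separating_hyperplane_compact_closed[OF cvK cK Kne cvL clL disj] by blast
  obtain g s where a: "a = (g, s)" by (cases a)
  have sL: "b < s * t" if "t \<ge> -\<delta>/8" for t using sepL that by (auto simp: L_def a)
  have s0: "s \<ge> 0"
  proof (rule ccontr)
    assume "\<not> s \<ge> 0"
    then have sn: "s < 0" by simp
    have "(\<bar>b\<bar> + 1) / (- s) \<ge> 0" using sn by (intro divide_nonneg_pos) auto
    then have "b < s * ((\<bar>b\<bar> + 1) / (- s))" using dpos by (intro sL) linarith
    also have "\<dots> = - (\<bar>b\<bar> + 1)" using sn by (simp add: field_simps)
    finally show False by simp
  qed
  have bneg: "b < s * (-\<delta>/8)" using sL[of "-\<delta>/8"] by simp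
  have TK: "T z \<in> K" if "z \<in> P" for z using that by (simp add: K_def)
  have sp: "s > 0"
  proof (rule ccontr)
    assume "\<not> s > 0"
    with s0 have "s = 0" by simp
    moreover have "(x0 /\<^sub>R 2, 0, x0 /\<^sub>R 2, 0) \<in> P"
    proof -
      have "x0 /\<^sub>R 2 \<in> Cn" using cone_scale[of x0 \<Omega> "1/2"] cone_self[OF x0] by (simp add: Cn_def)
      then show ?thesis unfolding memP using Cn0 uOm[OF x0] by simp
    qed
    then have "a \<bullet> T (x0 /\<^sub>R 2, 0, x0 /\<^sub>R 2, 0) < b" using sepK TK by blast
    ultimately show False using bneg by (simp add: a T_def)
  qed
  define g' where "g' = - (1 / s) *\<^sub>R g"
  have main: "c \<bullet> a2 - e \<bullet> a3 - f \<bullet> a4 \<le> g' \<bullet> (a1 + a2 - a3 - a4)"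
    if "(a1, a2, a3, a4) \<in> P" for a1 a2 a3 a4
  proof -
    have "g \<bullet> (a1 + a2 - a3 - a4) + s * (c \<bullet> a2 - e \<bullet> a3 - f \<bullet> a4) < b"
      using sepK TK[OF that] by (auto simp: a T_def)
    also have "b < 0" using bneg sp dpos using mult_pos_pos[OF sp, of "\<delta>/8"] dpos by linarith
    finally have "s * (c \<bullet> a2 - e \<bullet> a3 - f \<bullet> a4) < s * (g' \<bullet> (a1 + a2 - a3 - a4))"
      using sp by (simp add: g'_def)
    then show ?thesis using sp by simp
  qed
  show ?thesis unfolding jointly_measurable_def
  proof (intro exI ballI)
    fix x assume x: "x \<in> \<Omega>"
    have P1: "(x, 0, 0, 0) \<in> P" "(0, x, 0, 0) \<in> P" "(0, 0, x, 0) \<in> P" "(0, 0, 0, x) \<in> P"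
      unfolding memP using Cnx[OF x] Cn0 uOm[OF x] by simp_all
    show "0 \<le> g' \<bullet> x \<and> g' \<bullet> x \<le> e \<bullet> x \<and> g' \<bullet> x \<le> f \<bullet> x \<and> e \<bullet> x + f \<bullet> x \<le> g' \<bullet> x + u \<bullet> x"
    proof -
      have m1: "0 \<le> g' \<bullet> x" using main[OF P1(1)] by simp
      have m2: "c \<bullet> x \<le> g' \<bullet> x" using main[OF P1(2)] by simp
      have m3: "- (e \<bullet> x) \<le> - (g' \<bullet> x)" using main[OF P1(3)] by (simp add: inner_minus_right)
      have m4: "- (f \<bullet> x) \<le> - (g' \<bullet> x)" using main[OF P1(4)] by (simp add: inner_minus_right)
      have "c \<bullet> x = e \<bullet> x + f \<bullet> x - u \<bullet> x" by (simp add: c_def inner_diff_left inner_add_left)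
      then show ?thesis using m1 m2 m3 m4 by linarith
    qed
  qed
qed



lemma smear2: "2 *\<^sub>R smear u l a - u = l *\<^sub>R (2 *\<^sub>R a - u)"
proof -
  have "2 *\<^sub>R smear u l a = (2*l) *\<^sub>R a + (1 - l) *\<^sub>R u" by (simp add: smear_def scaleR_add_right)
  then show ?thesis by (simp add: algebra_simps)
qed

lemma steer_one:
  fixes uB :: "'b::euclidean_space"
  assumes ssA: "gpt_state_space \<Omega>A uA" and hw: "hat w uB = \<alpha>0" and st: "steering \<Omega>A uA \<Omega>B uB w"
    and a0: "\<alpha>0 \<in> \<Omega>A" and b: "\<beta> \<in> pos_cone \<Omega>A" "\<alpha>0 - \<beta> \<in> pos_cone \<Omega>A"
  shows "\<exists>b. gpt_effect \<Omega>B b \<and> hat w b = \<beta>"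
proof -
  define \<alpha> :: "nat \<Rightarrow> 'a" where "\<alpha> i = (if i = 0 then \<beta> else \<alpha>0 - \<beta>)" for i
  have u1: "uA \<bullet> \<alpha>0 = 1" using ss_u[OF ssA a0] .
  have p1: "uA \<bullet> \<beta> \<ge> 0" "uA \<bullet> (\<alpha>0 - \<beta>) \<ge> 0" using cone_u[OF ssA] b by auto
  have c: "\<forall>i<2. \<alpha> i \<in> pos_cone \<Omega>A \<and> 0 \<le> uA \<bullet> \<alpha> i \<and> uA \<bullet> \<alpha> i \<le> 1"
    using b p1 u1 by (auto simp: \<alpha>_def inner_diff_right)
  have s: "(\<Sum>i<2. \<alpha> i) = hat w uB" by (simp add: numeral_2_eq_2 \<alpha>_def hw)
  obtain e where e: "\<forall>i<2. gpt_effect \<Omega>B (e i)" "\<forall>i<2. \<alpha> i = hat w (e i)"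
    using st c s unfolding steering_def by blast
  have "gpt_effect \<Omega>B (e 0)" "\<alpha> 0 = hat w (e 0)" using e by auto
  then show ?thesis by (intro exI[of _ "e 0"]) (simp add: \<alpha>_def)
qed

lemma bell_hat:
  assumes bil: "bilinear w" and h1: "hat w b1 = \<beta>1" and h2: "hat w b2 = \<beta>2" and h0: "hat w uB = \<alpha>0"
  shows "bell uA uB w a1 a2 b1 b2 =
     2 * ((2 *\<^sub>R a1 - uA) \<bullet> (\<beta>1 + \<beta>2 - \<alpha>0) + (2 *\<^sub>R a2 - uA) \<bullet> (\<beta>1 - \<beta>2))"
proof -
  have k: "w X (2 *\<^sub>R b - uB) = X \<bullet> (2 *\<^sub>R hat w b - hat w uB)" for X b
    by (simp add: bilinear_rsub[OF bil] bilinear_rmul[OF bil] hat_inner[OF bil] inner_diff_right)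
  show ?thesis unfolding bell_def Let_def k h1 h2 h0
    by (simp add: inner_diff_right inner_add_right algebra_simps)
qed



theorem theorem1:
  fixes \<Omega>A :: "'a::euclidean_space set" and uA :: 'a
    and \<Omega>B :: "'b::euclidean_space set" and uB :: 'b
    and C :: "('a \<Rightarrow> 'b \<Rightarrow> real) set"
  assumes "gpt_state_space \<Omega>A uA" and "gpt_state_space \<Omega>B uB"
    and "composite_cone \<Omega>A \<Omega>B C"
    and "\<forall>\<alpha>\<in>\<Omega>A. \<exists>w\<in>composite_states uA uB C. hat w uB = \<alpha> \<and> steering \<Omega>A uA \<Omega>B uB w"
  shows "(\<forall>w\<in>composite_states uA uB C. \<forall>a1 a2 b1 b2.
             gpt_effect \<Omega>A a1 \<and> gpt_effect \<Omega>A a2 \<and> gpt_effect \<Omega>B b1 \<and> gpt_effect \<Omega>B b2 \<longrightarrow>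
             bell uA uB w a1 a2 b1 b2 \<le> 2 / lambda_opt \<Omega>A uA)
       \<and> (\<exists>w\<in>composite_states uA uB C. \<exists>a1 a2 b1 b2.
             gpt_effect \<Omega>A a1 \<and> gpt_effect \<Omega>A a2 \<and> gpt_effect \<Omega>B b1 \<and> gpt_effect \<Omega>B b2 \<and>
             bell uA uB w a1 a2 b1 b2 = 2 / lambda_opt \<Omega>A uA)"
proof -
  note ssA = assms(1) and ssB = assms(2)
  have wprops: "bilinear w \<and> w uA uB = 1 \<and> w \<in> max_tensor_cone \<Omega>A \<Omega>B"
    if "w \<in> composite_states uA uB C" for w
    using that assms(3) by (auto simp: composite_states_def composite_cone_def max_tensor_cone_def)
  define Cn where "Cn = pos_cone \<Omega>A"
  define D :: "('a \<times> 'a \<times> 'a \<times> 'a \<times> 'a) set" where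
    "D = {z. fst z \<in> \<Omega>A \<and> fst (snd z) \<in> Cn \<and> fst (snd (snd z)) \<in> Cn \<and>
           fst z - fst (snd z) \<in> Cn \<and> fst z - fst (snd (snd z)) \<in> Cn \<and>
           gpt_effect \<Omega>A (fst (snd (snd (snd z)))) \<and> gpt_effect \<Omega>A (snd (snd (snd (snd z))))}"
  define F :: "'a \<times> 'a \<times> 'a \<times> 'a \<times> 'a \<Rightarrow> real" where
    "F z = 2 * ((2 *\<^sub>R fst (snd (snd (snd z))) - uA) \<bullet> (fst (snd z) + fst (snd (snd z)) - fst z)
             + (2 *\<^sub>R snd (snd (snd (snd z))) - uA) \<bullet> (fst (snd z) - fst (snd (snd z))))" for z
  have memD: "(a0, b1, b2, e, f) \<in> D \<longleftrightarrow> a0 \<in> \<Omega>A \<and> b1 \<in> Cn \<and> b2 \<in> Cn \<and> a0 - b1 \<in> Cn \<and> a0 - b2 \<in> Cn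
     \<and> gpt_effect \<Omega>A e \<and> gpt_effect \<Omega>A f" for a0 b1 b2 e f
    by (simp add: D_def)
  have Fz: "F (a0, b1, b2, e, f) = 2 * ((2 *\<^sub>R e - uA) \<bullet> (b1 + b2 - a0) + (2 *\<^sub>R f - uA) \<bullet> (b1 - b2))"
    for a0 b1 b2 e f by (simp add: F_def)
  define Bc where "Bc = {y \<in> pos_cone \<Omega>A. uA \<bullet> y \<le> 1}"
  define E where "E = {e. gpt_effect \<Omega>A e}"
  have cC: "closed Cn" using cone_closed[OF ssA] by (simp add: Cn_def)
  have cE: "compact E" using effects_compact[OF ssA] by (simp add: E_def)
  have cO: "compact \<Omega>A" using ssA by (simp add: gpt_state_space_def)
  have "D \<subseteq> \<Omega>A \<times> Bc \<times> Bc \<times> E \<times> E"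
  proof
    fix z assume zD: "z \<in> D"
    obtain a0 b1 b2 e f where z: "z = (a0, b1, b2, e, f)" by (cases z) auto
    have m: "a0 \<in> \<Omega>A" "b1 \<in> Cn" "b2 \<in> Cn" "a0 - b1 \<in> Cn" "a0 - b2 \<in> Cn" "gpt_effect \<Omega>A e" "gpt_effect \<Omega>A f"
      using zD unfolding z memD by auto
    have "uA \<bullet> b1 \<le> 1" "uA \<bullet> b2 \<le> 1"
      using cone_u[OF ssA, of "a0 - b1"] cone_u[OF ssA, of "a0 - b2"] m ss_u[OF ssA m(1)]
      by (auto simp: Cn_def inner_diff_right)
    then show "z \<in> \<Omega>A \<times> Bc \<times> Bc \<times> E \<times> E" using m by (auto simp: z Bc_def E_def Cn_def)
  qed
  moreover have "bounded (\<Omega>A \<times> Bc \<times> Bc \<times> E \<times> E)"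
    using cone_bounded[OF ssA] compact_imp_bounded[OF cO] compact_imp_bounded[OF cE]
    by (simp add: Bc_def bounded_Times)
  ultimately have bD: "bounded D" by (rule bounded_subset[rotated])
  have clD: "closed D"
  proof -
    have cl: "closed {z. p z \<in> S}" if "closed S" "\<And>x. continuous (at x) p" for S and p :: "'a \<times> 'a \<times> 'a \<times> 'a \<times> 'a \<Rightarrow> 'a"
      using continuous_closed_vimage[OF that] by (simp add: vimage_def)
    have ce: "closed {z. gpt_effect \<Omega>A (p z)}" if "\<And>x. continuous (at x) p" for p :: "'a \<times> 'a \<times> 'a \<times> 'a \<times> 'a \<Rightarrow> 'a"
      using cl[OF compact_imp_closed[OF cE] that] by (simp add: E_def)
    show ?thesis unfolding D_def
      by (intro closed_Collect_conj cl ce compact_imp_closed[OF cO] cC continuous_intros)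
  qed
  have cD: "compact D" using bD clD by (simp add: compact_eq_bounded_closed)
  obtain x0 where x0: "x0 \<in> \<Omega>A" using ssA by (auto simp: gpt_state_space_def)
  have uOm: "\<And>x. x \<in> \<Omega>A \<Longrightarrow> uA \<bullet> x = 1" using ssA by (simp add: ss_u)
  have effu: "gpt_effect \<Omega>A uA" using uOm by (simp add: gpt_effect_def)
  have Cn0: "0 \<in> Cn" using cone_zero x0 by (auto simp: Cn_def)
  have Cnx: "x0 \<in> Cn" using cone_self[OF x0] by (simp add: Cn_def)
  have z0: "(x0, x0, x0, uA, uA) \<in> D" unfolding memD using x0 Cn0 Cnx effu by simp
  have "continuous_on D F" unfolding F_def by (intro continuous_intros)
  then obtain zs where zs: "zs \<in> D" and zmax: "\<And>z. z \<in> D \<Longrightarrow> F z \<le> F zs"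
    using continuous_attains_sup[OF cD] z0 by blast
  define M where "M = F zs"
  have "F (x0, x0, x0, uA, uA) = 2" unfolding Fz using uOm[OF x0] by (simp add: inner_simps)
  then have M2: "M \<ge> 2" using zmax[OF z0] by (simp add: M_def)
  have JM: "jointly_measurable \<Omega>A uA (smear uA l e) (smear uA l f)"
    if e: "gpt_effect \<Omega>A e" and f: "gpt_effect \<Omega>A f" and l: "0 \<le> l" "l < 2 / M" for e f l
  proof (rule core[OF ssA])
    show "0 < 1 - l * M / 2" using l M2 by (simp add: field_simps)
    fix a0 b1 b2 assume h: "a0 \<in> \<Omega>A" "b1 \<in> pos_cone \<Omega>A" "b2 \<in> pos_cone \<Omega>A"
      "a0 - b1 \<in> pos_cone \<Omega>A" "a0 - b2 \<in> pos_cone \<Omega>A"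
    then have "(a0, b1, b2, e, f) \<in> D" unfolding memD Cn_def using e f by simp
    then have le: "F (a0, b1, b2, e, f) \<le> M" using zmax by (simp add: M_def)
    have "(2 *\<^sub>R smear uA l e - uA) \<bullet> (b1 + b2 - a0) + (2 *\<^sub>R smear uA l f - uA) \<bullet> (b1 - b2)
        = l / 2 * F (a0, b1, b2, e, f)" unfolding smear2 Fz by (simp add: algebra_simps)
    also have "\<dots> \<le> l / 2 * M" using le l by (intro mult_left_mono) auto
    finally show "(2 *\<^sub>R smear uA l e - uA) \<bullet> (b1 + b2 - a0) + (2 *\<^sub>R smear uA l f - uA) \<bullet> (b1 - b2)
        \<le> 1 - (1 - l * M / 2)" by simp
  qed
  have Mpos: "M > 0" using M2 by simp
  have lam: "2 / M \<le> lambda_ef \<Omega>A uA e f \<and> lambda_ef \<Omega>A uA e f \<le> 1 \<and>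
     (\<forall>l. 0 \<le> l \<and> l < 2 / M \<longrightarrow> l \<in> {l \<in> {0..1}. jointly_measurable \<Omega>A uA (smear uA l e) (smear uA l f)})"
    if e: "gpt_effect \<Omega>A e" and f: "gpt_effect \<Omega>A f" for e f
  proof -
    define S where "S = {l \<in> {0..1}. jointly_measurable \<Omega>A uA (smear uA l e) (smear uA l f)}"
    have inS: "l \<in> S" if "0 \<le> l" "l < 2 / M" for l
    proof -
      have "2 / M \<le> 1" using M2 by simp
      then show ?thesis using JM[OF e f that] that by (simp add: S_def)
    qed
    have bdd: "bdd_above S" by (auto simp: S_def bdd_above_def)
    have ne: "S \<noteq> {}" using inS[of 0] Mpos by auto
    have le1: "Sup S \<le> 1" using ne by (intro cSup_least) (auto simp: S_def)
    have ge: "l \<le> Sup S" if "0 \<le> l" "l < 2 / M" for l using cSup_upper[OF inS[OF that] bdd] .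
    have "2 / M \<le> Sup S"
    proof (rule ccontr)
      assume "\<not> 2 / M \<le> Sup S"
      then have lt: "Sup S < 2 / M" by simp
      have "0 \<le> Sup S" using ge[of 0] Mpos by simp
      then have "(Sup S + 2 / M) / 2 \<le> Sup S" using lt by (intro ge) auto
      then show False using lt by simp
    qed
    then show ?thesis using le1 inS by (simp add: lambda_ef_def S_def)
  qed
  define LS where "LS = {lambda_ef \<Omega>A uA e f | e f. gpt_effect \<Omega>A e \<and> gpt_effect \<Omega>A f}"
  have LSne: "LS \<noteq> {}" using effu by (auto simp: LS_def)
  have LSb: "bdd_below LS" unfolding bdd_below_def LS_def using lam by blast
  have lopt: "2 / M \<le> lambda_opt \<Omega>A uA"
    unfolding lambda_opt_def LS_def[symmetric] using LSne by (intro cInf_greatest) (auto simp: LS_def lam)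
  have loptpos: "lambda_opt \<Omega>A uA > 0" using lopt Mpos by (smt (verit) divide_pos_pos)
  have lopt_le: "lambda_opt \<Omega>A uA \<le> lambda_ef \<Omega>A uA e f" if "gpt_effect \<Omega>A e" "gpt_effect \<Omega>A f" for e f
    unfolding lambda_opt_def LS_def[symmetric] using that by (intro cInf_lower LSb) (auto simp: LS_def)
  have upper: "bell uA uB w a1 a2 b1 b2 \<le> 2 / lambda_opt \<Omega>A uA"
    if w: "w \<in> composite_states uA uB C" and ef: "gpt_effect \<Omega>A a1" "gpt_effect \<Omega>A a2"
      "gpt_effect \<Omega>B b1" "gpt_effect \<Omega>B b2" for w a1 a2 b1 b2
  proof -
    define Bl where "Bl = bell uA uB w a1 a2 b1 b2"
    have wp: "bilinear w" "w uA uB = 1" "w \<in> max_tensor_cone \<Omega>A \<Omega>B" using wprops[OF w] by auto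
    define S where "S = {l \<in> {0..1}. jointly_measurable \<Omega>A uA (smear uA l a1) (smear uA l a2)}"
    have lS: "l * Bl \<le> 2" if lin: "l \<in> S" for l
    proof -
      obtain g where g: "\<forall>x\<in>\<Omega>A. 0 \<le> g \<bullet> x \<and> g \<bullet> x \<le> smear uA l a1 \<bullet> x \<and> g \<bullet> x \<le> smear uA l a2 \<bullet> x
          \<and> smear uA l a1 \<bullet> x + smear uA l a2 \<bullet> x \<le> g \<bullet> x + uA \<bullet> x"
        using lin by (auto simp: S_def jointly_measurable_def)
      have "bell uA uB w (smear uA l a1) (smear uA l a2) b1 b2 \<le> 2"
        by (rule jm_bell[OF wp(3) wp(2) ef(3) ef(4) ssB g])
      then show ?thesis using smear_bell[OF wp(1)] by (simp add: Bl_def)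
    qed
    show ?thesis
    proof (cases "Bl \<le> 0")
      case True
      then show ?thesis using loptpos by (simp add: Bl_def) (smt (verit) divide_pos_pos)
    next
      case False
      have ne: "S \<noteq> {}" using lam[OF ef(1,2)] Mpos by (auto simp: S_def)
      have "lambda_ef \<Omega>A uA a1 a2 \<le> 2 / Bl" unfolding lambda_ef_def S_def[symmetric]
        using ne lS False by (intro cSup_least) (auto simp: field_simps)
      then have "lambda_opt \<Omega>A uA \<le> 2 / Bl" using lopt_le[OF ef(1,2)] by simp
      then have "lambda_opt \<Omega>A uA * Bl \<le> 2" using False by (simp add: field_simps)
      then show ?thesis using loptpos by (simp add: Bl_def field_simps)
    qed
  qed
  obtain a0 b1 b2 e f where zsd: "zs = (a0, b1, b2, e, f)" by (cases zs) auto
  have m: "a0 \<in> \<Omega>A" "b1 \<in> Cn" "b2 \<in> Cn" "a0 - b1 \<in> Cn" "a0 - b2 \<in> Cn" "gpt_effect \<Omega>A e" "gpt_effect \<Omega>A f"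
    using zs unfolding zsd memD by auto
  obtain w where w: "w \<in> composite_states uA uB C" "hat w uB = a0" "steering \<Omega>A uA \<Omega>B uB w"
    using assms(4) m(1) by blast
  obtain c1 where c1: "gpt_effect \<Omega>B c1" "hat w c1 = b1"
    using steer_one[OF ssA w(2) w(3) m(1)] m by (auto simp: Cn_def)
  obtain c2 where c2: "gpt_effect \<Omega>B c2" "hat w c2 = b2"
    using steer_one[OF ssA w(2) w(3) m(1)] m by (auto simp: Cn_def)
  have bellM: "bell uA uB w e f c1 c2 = M"
    using bell_hat[OF conjunct1[OF wprops[OF w(1)]] c1(2) c2(2) w(2)] by (simp add: M_def zsd Fz)
  have "M \<le> 2 / lambda_opt \<Omega>A uA" using upper[OF w(1) m(6) m(7) c1(1) c2(1)] bellM by simp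
  moreover have "2 / lambda_opt \<Omega>A uA \<le> M" using lopt Mpos loptpos by (simp add: field_simps)
  ultimately have "bell uA uB w e f c1 c2 = 2 / lambda_opt \<Omega>A uA" using bellM by simp
  then show ?thesis using upper w(1) m(6,7) c1(1) c2(1) by blast
qed


end
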